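(* Let $X$ be a Banach space which has weak quasi-normal structure but does not have weak normal structure. Then there exist a nontrivial weakly compact convex subset $K$ of $X$ and a mapping $T:K\to K$ such that (i) $T$ is not a Kannan mapping; (ii) $T$ is an orbitally Kannan mapping which diminishes the radius of orbits; (iii) $T$ has no fixed point.
   Context: Nontrivial means containing more than one point. For $x\in X$, $A\subseteq X$: $r_x(A)=\sup\{\|x-y\|:y\in A\}$, $\delta(A)$ the diameter; $O_T(x)=\{x,Tx,T^2x,\dots\}$. $T$ is Kannan if $\|Tx-Ty\|\le\frac12(\|x-Tx\|+\|y-Ty\|)$ for all $x,y$; orbitally Kannan if $\|Tx-Ty\|\le\frac12(r_x(O_T(x))+r_y(O_T(y)))$ for all $x,y$; diminishes the radius of orbits if $r_{Tx}(O_T(Tx))\le r_x(O_T(x))$ for all $x$. $X$ has weak normal structure if every nontrivial weakly compact convex $K\subseteq X$ satisfies: for every closed convex $K_0\subseteq K$ with $\delta(K_0)>0$ there is $x_0\in K_0$ with $r_{x_0}(K_0)<\delta(K_0)$. $X$ has weak quasi-normal structure if every nontrivial weakly compact convex $C\subseteq X$ satisfies: for every nontrivial closed convex $K_0\subseteq C$ there is $x_0\in K_0$ with $\|x_0-y\|<\delta(K_0)$ for all $y\in K_0$. *)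

theory Defs
  imports "HOL-Analysis.Analysis"
begin

definition weak_topology :: "'a::real_normed_vector topology" where
  "weak_topology = topology_generated_by
     {{x. f x \<in> U} | (f :: 'a \<Rightarrow> real) U. bounded_linear f \<and> open U}"

definition weakly_compact :: "'a::real_normed_vector set \<Rightarrow> bool" where
  "weakly_compact K \<longleftrightarrow> compactin weak_topology K"

definition nontrivial :: "'a set \<Rightarrow> bool" where
  "nontrivial A \<longleftrightarrow> (\<exists>x\<in>A. \<exists>y\<in>A. x \<noteq> y)"

definition rad :: "'a::real_normed_vector \<Rightarrow> 'a set \<Rightarrow> real" where
  "rad x A = (SUP y\<in>A. norm (x - y))"

definition orbit :: "('a \<Rightarrow> 'a) \<Rightarrow> 'a \<Rightarrow> 'a set" where
  "orbit T x = range (\<lambda>n. (T ^^ n) x)"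

definition kannan :: "'a::real_normed_vector set \<Rightarrow> ('a \<Rightarrow> 'a) \<Rightarrow> bool" where
  "kannan K T \<longleftrightarrow> (\<forall>x\<in>K. \<forall>y\<in>K.
     norm (T x - T y) \<le> (1/2) * (norm (x - T x) + norm (y - T y)))"

definition orbitally_kannan :: "'a::real_normed_vector set \<Rightarrow> ('a \<Rightarrow> 'a) \<Rightarrow> bool" where
  "orbitally_kannan K T \<longleftrightarrow> (\<forall>x\<in>K. \<forall>y\<in>K.
     norm (T x - T y) \<le> (1/2) * (rad x (orbit T x) + rad y (orbit T y)))"

definition diminishes_radius_of_orbits :: "'a::real_normed_vector set \<Rightarrow> ('a \<Rightarrow> 'a) \<Rightarrow> bool" where
  "diminishes_radius_of_orbits K T \<longleftrightarrow>
     (\<forall>x\<in>K. rad (T x) (orbit T (T x)) \<le> rad x (orbit T x))"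

definition weak_normal_structure :: "'a::real_normed_vector itself \<Rightarrow> bool" where
  "weak_normal_structure _ \<longleftrightarrow>
     (\<forall>K :: 'a set. nontrivial K \<and> weakly_compact K \<and> convex K \<longrightarrow>
        (\<forall>K0. K0 \<subseteq> K \<and> closed K0 \<and> convex K0 \<and> diameter K0 > 0 \<longrightarrow>
           (\<exists>x0\<in>K0. rad x0 K0 < diameter K0)))"

definition weak_quasi_normal_structure :: "'a::real_normed_vector itself \<Rightarrow> bool" where
  "weak_quasi_normal_structure _ \<longleftrightarrow>
     (\<forall>C :: 'a set. nontrivial C \<and> weakly_compact C \<and> convex C \<longrightarrow>
        (\<forall>K0. K0 \<subseteq> C \<and> nontrivial K0 \<and> closed K0 \<and> convex K0 \<longrightarrow>
           (\<exists>x0\<in>K0. \<forall>y\<in>K0. norm (x0 - y) < diameter K0)))"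

end

theory Submission
  imports Defs
begin

lemma hb_ext:
  fixes p :: "'a::real_vector \<Rightarrow> real"
  assumes sub: "\<And>x y. p (x + y) \<le> p x + p y"
    and hom: "\<And>c x. c > 0 \<Longrightarrow> p (c *\<^sub>R x) \<le> c * p x"
    and p0: "p 0 \<le> 0"
    and G0: "subspace G0" and G0d: "\<And>x a. (x,a) \<in> G0 \<Longrightarrow> a \<le> p x"
  shows "\<exists>F. linear F \<and> (\<forall>x. F x \<le> p x) \<and> (\<forall>x a. (x,a) \<in> G0 \<longrightarrow> F x = a)"
proof -
  have p00: "p 0 = 0"
  proof -
    have "p ((2::real) *\<^sub>R 0) \<le> 2 * p 0" using hom[of 2 0] by simp
    then show ?thesis using p0 by simp
  qed
  define A where "A = {G :: ('a \<times> real) set. subspace G \<and> (\<forall>x a. (x,a) \<in> G \<longrightarrow> a \<le> p x) \<and> G0 \<subseteq> G}"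
  have "\<exists>M\<in>A. \<forall>X\<in>A. M \<subseteq> X \<longrightarrow> X = M"
  proof (rule Zorn_Lemma2, intro ballI)
    fix C assume C: "C \<in> chains A"
    show "\<exists>U\<in>A. \<forall>X\<in>C. X \<subseteq> U"
    proof (cases "C = {}")
      case True
      have "G0 \<in> A" unfolding A_def using G0 G0d by auto
      then show ?thesis using True by blast
    next
      case False
      have CA: "C \<subseteq> A" and ch: "\<And>X Y. X \<in> C \<Longrightarrow> Y \<in> C \<Longrightarrow> X \<subseteq> Y \<or> Y \<subseteq> X"
        using C unfolding chains_def chain_subset_def by auto
      have "subspace (\<Union>C)"
        unfolding subspace_def
      proof (intro conjI ballI allI)
        obtain X where "X \<in> C" using False by blast
        then show "0 \<in> \<Union>C" using CA unfolding A_def by (auto simp: subspace_def)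
      next
        fix x y assume "x \<in> \<Union>C" "y \<in> \<Union>C"
        then obtain X Y where XY: "X \<in> C" "Y \<in> C" "x \<in> X" "y \<in> Y" by blast
        then have "X \<subseteq> Y \<or> Y \<subseteq> X" using ch by blast
        then show "x + y \<in> \<Union>C"
        proof
          assume "X \<subseteq> Y"
          then have "x \<in> Y" "subspace Y" using XY CA unfolding A_def by auto
          then have "x + y \<in> Y" using XY by (simp add: subspace_add)
          then show ?thesis using XY by blast
        next
          assume "Y \<subseteq> X"
          then have "y \<in> X" "subspace X" using XY CA unfolding A_def by auto
          then have "x + y \<in> X" using XY by (simp add: subspace_add)
          then show ?thesis using XY by blast
        qed
      next
        fix c x assume "x \<in> \<Union>C"
        then obtain X where "X \<in> C" "x \<in> X" by blast
        moreover have "subspace X" using \<open>X \<in> C\<close> CA unfolding A_def by auto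
        ultimately have "c *\<^sub>R x \<in> X" by (simp add: subspace_scale)
        then show "c *\<^sub>R x \<in> \<Union>C" using \<open>X \<in> C\<close> by blast
      qed
      moreover have "\<forall>x a. (x,a) \<in> \<Union>C \<longrightarrow> a \<le> p x" using CA unfolding A_def by blast
      moreover have "G0 \<subseteq> \<Union>C" using CA False unfolding A_def by blast
      ultimately have "\<Union>C \<in> A" unfolding A_def by blast
      then show ?thesis by blast
    qed
  qed
  then obtain M where MA: "M \<in> A" and Mmax: "\<And>X. X \<in> A \<Longrightarrow> M \<subseteq> X \<Longrightarrow> X = M" by blast
  have Msub: "subspace M" and Mdom: "\<And>x a. (x,a) \<in> M \<Longrightarrow> a \<le> p x" and MG0: "G0 \<subseteq> M" using MA unfolding A_def by auto
  have Mscale: "(c *\<^sub>R x, c * a) \<in> M" if "(x,a) \<in> M" for c x a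
    using Msub that unfolding subspace_def by (metis scaleR_Pair real_scaleR_def)
  have Madd: "(x + y, a + b) \<in> M" if "(x,a) \<in> M" "(y,b) \<in> M" for x y a b
    using Msub that unfolding subspace_def by (metis add_Pair)
  have M0: "(0,0) \<in> M" using Msub unfolding subspace_def by (simp add: zero_prod_def)
  have uniq: "a = b" if "(x,a) \<in> M" "(x,b) \<in> M" for x a b
  proof -
    have "(x + (-1) *\<^sub>R x, a + (-1) * b) \<in> M" using Madd Mscale that by blast
    then have "a - b \<le> 0" using Mdom p0 by fastforce
    moreover have "(x + (-1) *\<^sub>R x, b + (-1) * a) \<in> M" using Madd Mscale that by blast
    then have "b - a \<le> 0" using Mdom p0 by fastforce
    ultimately show ?thesis by simp
  qed
  have total: "\<exists>a. (y,a) \<in> M" for y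
  proof (rule ccontr)
    assume ny: "\<not> (\<exists>a. (y,a) \<in> M)"
    define L where "L = {a - p (x - y) | x a. (x,a) \<in> M}"
    define c where "c = Sup L"
    have Lne: "L \<noteq> {}" using M0 unfolding L_def by blast
    have key: "a - p (x - y) \<le> p (x' + y) - a'" if "(x,a) \<in> M" "(x',a') \<in> M" for x a x' a'
    proof -
      have "a + a' \<le> p (x + x')" using Mdom Madd that by blast
      also have "\<dots> \<le> p (x - y) + p (x' + y)" using sub[of "x - y" "x' + y"] by simp
      finally show ?thesis by simp
    qed
    have bdd: "bdd_above L" unfolding L_def bdd_above_def using key M0 by fastforce
    have B1: "a - p (x - y) \<le> c" if "(x,a) \<in> M" for x a
      unfolding c_def using that bdd by (auto intro!: cSup_upper simp: L_def)
    have B2: "c \<le> p (x' + y) - a'" if "(x',a') \<in> M" for x' a'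
      unfolding c_def using that Lne key by (auto intro!: cSup_least simp: L_def)
    define M' where "M' = {g + t *\<^sub>R (y, c) | g t. g \<in> M}"
    have "subspace M'"
      unfolding subspace_def M'_def
    proof (intro conjI ballI allI)
      show "0 \<in> {g + t *\<^sub>R (y, c) |g t. g \<in> M}" using M0
        by (auto intro!: exI[of _ "(0,0)"] exI[of _ "0::real"] simp: zero_prod_def)
    next
      fix u v assume "u \<in> {g + t *\<^sub>R (y, c) |g t. g \<in> M}" "v \<in> {g + t *\<^sub>R (y, c) |g t. g \<in> M}"
      then obtain g1 t1 g2 t2 where "u = g1 + t1 *\<^sub>R (y,c)" "v = g2 + t2 *\<^sub>R (y,c)" "g1 \<in> M" "g2 \<in> M" by blast
      moreover have "u + v = (g1 + g2) + (t1 + t2) *\<^sub>R (y,c)" using calculation by (simp add: algebra_simps)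
      moreover have "g1 + g2 \<in> M" using Msub calculation unfolding subspace_def by blast
      ultimately show "u + v \<in> {g + t *\<^sub>R (y, c) |g t. g \<in> M}" by blast
    next
      fix r u assume "u \<in> {g + t *\<^sub>R (y, c) |g t. g \<in> M}"
      then obtain g1 t1 where "u = g1 + t1 *\<^sub>R (y,c)" "g1 \<in> M" by blast
      moreover have "r *\<^sub>R u = r *\<^sub>R g1 + (r * t1) *\<^sub>R (y,c)" using calculation by (simp add: algebra_simps)
      moreover have "r *\<^sub>R g1 \<in> M" using Msub calculation unfolding subspace_def by blast
      ultimately show "r *\<^sub>R u \<in> {g + t *\<^sub>R (y, c) |g t. g \<in> M}" by blast
    qed
    moreover have "b \<le> p z" if "(z,b) \<in> M'" for z b
    proof -
      obtain g t where gt: "(z,b) = g + t *\<^sub>R (y,c)" "g \<in> M" using \<open>(z,b) \<in> M'\<close> unfolding M'_def by blast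
      obtain x a where g: "g = (x,a)" by (cases g)
      have zb: "z = x + t *\<^sub>R y" "b = a + t * c" using gt g by auto
      have xa: "(x,a) \<in> M" using gt g by simp
      consider "t > 0" | "t < 0" | "t = 0" by linarith
      then show ?thesis
      proof cases
        case 1
        have m: "((1/t) *\<^sub>R x, (1/t) * a) \<in> M" using Mscale xa by blast
        have "c \<le> p ((1/t) *\<^sub>R x + y) - (1/t) * a" using B2[OF m] .
        moreover have "(1/t) *\<^sub>R x + y = (1/t) *\<^sub>R z" using 1 zb by (simp add: algebra_simps)
        moreover have "p ((1/t) *\<^sub>R z) \<le> (1/t) * p z" using hom[of "1/t" z] 1 by simp
        ultimately have "c \<le> (1/t) * p z - (1/t) * a" by simp
        then have "t * c \<le> t * ((1/t) * p z - (1/t) * a)" using 1 by (simp add: mult_left_mono)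
        then have "t * c \<le> p z - a" using 1 by (simp add: algebra_simps)
        then show ?thesis using zb by simp
      next
        case 2
        define s where "s = - t"
        have s: "s > 0" using 2 s_def by simp
        have m: "((1/s) *\<^sub>R x, (1/s) * a) \<in> M" using Mscale xa by blast
        have "(1/s) * a - p ((1/s) *\<^sub>R x - y) \<le> c" using B1[OF m] .
        moreover have "(1/s) *\<^sub>R x - y = (1/s) *\<^sub>R z" using s zb s_def by (simp add: algebra_simps)
        moreover have "p ((1/s) *\<^sub>R z) \<le> (1/s) * p z" using hom[of "1/s" z] s by simp
        ultimately have "(1/s) * a - (1/s) * p z \<le> c" by simp
        then have "s * ((1/s) * a - (1/s) * p z) \<le> s * c" using s by (simp add: mult_left_mono)
        then have "a - p z \<le> s * c" using s by (simp add: algebra_simps)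
        then show ?thesis using zb s_def by simp
      next
        case 3
        then show ?thesis using zb Mdom xa by simp
      qed
    qed
    moreover have "M \<subseteq> M'"
    proof
      fix g assume "g \<in> M"
      moreover have "g = g + (0::real) *\<^sub>R (y,c)" by (simp add: zero_prod_def)
      ultimately show "g \<in> M'" unfolding M'_def by blast
    qed
    ultimately have "M' \<in> A" "M \<subseteq> M'" unfolding A_def using MG0 by auto
    then have "M' = M" using Mmax by blast
    moreover have "(y,c) \<in> M'"
    proof -
      have "(y,c) = (0,0) + (1::real) *\<^sub>R (y,c)" by simp
      then show ?thesis unfolding M'_def using M0 by blast
    qed
    ultimately show False using ny by blast
  qed
  define F where "F x = (THE a. (x,a) \<in> M)" for x
  have FM: "(x, F x) \<in> M" for x
    unfolding F_def using total[of x] uniq by (metis theI)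
  have Feq: "F x = a" if "(x,a) \<in> M" for x a using FM uniq that by blast
  have "linear F"
  proof (rule linearI)
    fix x y show "F (x + y) = F x + F y" using Feq Madd FM by blast
  next
    fix r x show "F (r *\<^sub>R x) = r *\<^sub>R F x" using Feq Mscale FM by simp
  qed
  moreover have "\<forall>x. F x \<le> p x" using FM Mdom by blast
  moreover have "\<forall>x a. (x,a) \<in> G0 \<longrightarrow> F x = a" using Feq MG0 by blast
  ultimately show ?thesis by blast
qed

lemma hb_exists:
  fixes p :: "'a::real_vector \<Rightarrow> real"
  assumes sub: "\<And>x y. p (x + y) \<le> p x + p y"
    and hom: "\<And>c x. c > 0 \<Longrightarrow> p (c *\<^sub>R x) \<le> c * p x"
    and p0: "p 0 \<le> 0"
  shows "\<exists>F. linear F \<and> (\<forall>x. F x \<le> p x)"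
proof -
  have p00: "p 0 = 0"
  proof -
    have "p ((2::real) *\<^sub>R 0) \<le> 2 * p 0" using hom[of 2 0] by simp
    then show ?thesis using p0 by simp
  qed
  have "subspace {0::'a \<times> real}" by (simp add: subspace_def)
  moreover have "\<And>x a. (x,a) \<in> {0::'a \<times> real} \<Longrightarrow> a \<le> p x" using p00 by (simp add: zero_prod_def)
  ultimately show ?thesis using hb_ext[OF sub hom p0] by blast
qed

lemma norming_functional:
  fixes x :: "'a::real_normed_vector"
  shows "\<exists>F. bounded_linear F \<and> (\<forall>v. \<bar>F v\<bar> \<le> norm v) \<and> F x = norm x"
proof -
  define G0 where "G0 = {(t *\<^sub>R x, t * norm x) | t. True}"
  have "subspace G0" unfolding subspace_def G0_def
  proof (intro conjI ballI allI)
    show "0 \<in> {(t *\<^sub>R x, t * norm x) |t. True}"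
      by (rule CollectI, rule exI[of _ 0]) (simp add: zero_prod_def)
  next
    fix u v assume "u \<in> {(t *\<^sub>R x, t * norm x) |t. True}" "v \<in> {(t *\<^sub>R x, t * norm x) |t. True}"
    then obtain t1 t2 where "u = (t1 *\<^sub>R x, t1 * norm x)" "v = (t2 *\<^sub>R x, t2 * norm x)" by blast
    then show "u + v \<in> {(t *\<^sub>R x, t * norm x) |t. True}"
      by (intro CollectI exI[of _ "t1 + t2"]) (simp add: algebra_simps)
  next
    fix c u assume "u \<in> {(t *\<^sub>R x, t * norm x) |t. True}"
    then obtain t1 where "u = (t1 *\<^sub>R x, t1 * norm x)" by blast
    then show "c *\<^sub>R u \<in> {(t *\<^sub>R x, t * norm x) |t. True}"
      by (intro CollectI exI[of _ "c * t1"]) simp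
  qed
  moreover have "a \<le> norm v" if vG: "(v,a) \<in> G0" for v a
  proof -
    obtain t where "v = t *\<^sub>R x" "a = t * norm x" using vG unfolding G0_def by blast
    then show ?thesis by (simp add: mult_right_mono)
  qed
  moreover have "(x, norm x) \<in> G0" unfolding G0_def by (rule CollectI, rule exI[of _ 1]) simp
  ultimately obtain F where F: "linear F" "\<forall>v. F v \<le> norm v" "\<forall>v a. (v,a) \<in> G0 \<longrightarrow> F v = a"
    using hb_ext[of norm G0] norm_triangle_ineq by (force simp: abs_mult)
  have ab: "\<bar>F v\<bar> \<le> norm v" for v
  proof -
    have "- F v \<le> norm v" using F(2)[rule_format, of "-v"] F(1) by (simp add: linear_neg)
    then show ?thesis using F(2) by (simp add: abs_le_iff)
  qed
  have "bounded_linear F"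
  proof (rule bounded_linear_intro[where K=1])
    fix u v show "F (u + v) = F u + F v" using F(1) by (simp add: linear_add)
  next
    fix r v show "F (r *\<^sub>R v) = r *\<^sub>R F v" using F(1) by (simp add: linear_scale)
  next
    fix v show "norm (F v) \<le> norm v * 1" using ab by simp
  qed
  then show ?thesis using ab F(3) \<open>(x, norm x) \<in> G0\<close> by blast
qed

lemma sep_point:
  fixes K1 :: "'a::real_normed_vector set"
  assumes cl: "closed K1" and cv: "convex K1" and ne: "K1 \<noteq> {}" and x: "x \<notin> K1"
  shows "\<exists>(F :: 'a \<Rightarrow> real) d. bounded_linear F \<and> d > 0 \<and> (\<forall>k\<in>K1. F x + d \<le> F k)"
proof -
  define d where "d = infdist x K1"
  have d: "d > 0" unfolding d_def using infdist_pos_not_in_closed[OF cl ne x] .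
  have dk: "d \<le> norm (k - x)" if "k \<in> K1" for k
    unfolding d_def using infdist_le[OF that, of x] by (simp add: dist_norm norm_minus_commute)
  define S where "S v = {norm (v + t *\<^sub>R (k - x)) - t * d | t k. t \<ge> 0 \<and> k \<in> K1}" for v
  define p where "p v = Inf (S v)" for v
  obtain k0 where k0: "k0 \<in> K1" using ne by blast
  have Sne: "S v \<noteq> {}" for v
  proof -
    have "norm (v + 0 *\<^sub>R (k0 - x)) - 0 * d \<in> S v" unfolding S_def using k0
      by (intro CollectI exI[of _ "0::real"] exI[of _ k0]) simp
    then show ?thesis by blast
  qed
  have Slow: "- norm v \<le> a" if aS: "a \<in> S v" for v a
  proof -
    obtain t k where tk: "t \<ge> 0" "k \<in> K1" "a = norm (v + t *\<^sub>R (k - x)) - t * d"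
      using aS unfolding S_def by blast
    have "t * d \<le> t * norm (k - x)" using dk[OF tk(2)] tk(1) by (simp add: mult_left_mono)
    also have "\<dots> = norm (t *\<^sub>R (k - x))" using tk(1) by simp
    also have "\<dots> \<le> norm (v + t *\<^sub>R (k - x)) + norm v"
      using norm_triangle_ineq4[of "v + t *\<^sub>R (k - x)" v] by simp
    finally show ?thesis using tk(3) by simp
  qed
  have bdd: "bdd_below (S v)" for v unfolding bdd_below_def using Slow by blast
  have pS: "p v \<le> a" if "a \<in> S v" for v a unfolding p_def using that bdd by (rule cInf_lower)
  have Sp: "b \<le> p v" if "\<And>a. a \<in> S v \<Longrightarrow> b \<le> a" for v b
    unfolding p_def using Sne that by (rule cInf_greatest)
  have sub: "p (v + w) \<le> p v + p w" for v w
  proof -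
    have "p (v + w) \<le> a + b" if a: "a \<in> S v" and b: "b \<in> S w" for a b
    proof -
      obtain t1 k1 where 1: "t1 \<ge> 0" "k1 \<in> K1" "a = norm (v + t1 *\<^sub>R (k1 - x)) - t1 * d"
        using a unfolding S_def by blast
      obtain t2 k2 where 2: "t2 \<ge> 0" "k2 \<in> K1" "b = norm (w + t2 *\<^sub>R (k2 - x)) - t2 * d"
        using b unfolding S_def by blast
      show ?thesis
      proof (cases "t1 + t2 = 0")
        case True
        then have "t1 = 0" "t2 = 0" using 1 2 by auto
        then have "norm ((v + w) + 0 *\<^sub>R (k1 - x)) - 0 * d \<in> S (v + w)"
          unfolding S_def using 1 by (intro CollectI exI[of _ "0::real"] exI[of _ k1]) simp
        then have "p (v + w) \<le> norm (v + w)" using pS[of _ "v + w"] by simp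
        also have "\<dots> \<le> a + b" using 1 2 \<open>t1 = 0\<close> \<open>t2 = 0\<close> norm_triangle_ineq[of v w] by simp
        finally show ?thesis .
      next
        case False
        define T where "T = t1 + t2"
        have T: "T > 0" using False 1 2 T_def by auto
        define k3 where "k3 = (t1 / T) *\<^sub>R k1 + (t2 / T) *\<^sub>R k2"
        have k3: "k3 \<in> K1" unfolding k3_def
          using convexD[OF cv 1(2) 2(2), of "t1/T" "t2/T"] 1 2 T T_def by (simp add: add_divide_distrib[symmetric])
        have e1: "T *\<^sub>R k3 = t1 *\<^sub>R k1 + t2 *\<^sub>R k2"
          unfolding k3_def using T by (simp add: scaleR_add_right)
        have eq: "T *\<^sub>R (k3 - x) = t1 *\<^sub>R (k1 - x) + t2 *\<^sub>R (k2 - x)"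
          using e1 T_def by (simp add: algebra_simps)
        have "norm ((v + w) + T *\<^sub>R (k3 - x)) - T * d \<in> S (v + w)"
          unfolding S_def using T k3 by (intro CollectI exI[of _ T] exI[of _ k3]) simp
        then have "p (v + w) \<le> norm ((v + w) + T *\<^sub>R (k3 - x)) - T * d" using pS by blast
        also have "\<dots> = norm ((v + t1 *\<^sub>R (k1 - x)) + (w + t2 *\<^sub>R (k2 - x))) - T * d"
        proof -
          have "(v + w) + T *\<^sub>R (k3 - x) = (v + t1 *\<^sub>R (k1 - x)) + (w + t2 *\<^sub>R (k2 - x))"
            unfolding eq by (simp add: algebra_simps)
          then show ?thesis by (simp only:)
        qed
        also have "\<dots> \<le> a + b" using 1 2 T_def norm_triangle_ineq[of "v + t1 *\<^sub>R (k1 - x)" "w + t2 *\<^sub>R (k2 - x)"]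
          by (simp add: algebra_simps)
        finally show ?thesis .
      qed
    qed
    then have 1: "\<And>b. b \<in> S w \<Longrightarrow> p (v + w) - b \<le> p v"
      by (intro Sp) (metis diff_le_eq add.commute)
    have "\<And>b. b \<in> S w \<Longrightarrow> p (v + w) - p v \<le> b" using 1 by (simp add: algebra_simps)
    then have "p (v + w) - p v \<le> p w" by (rule Sp)
    then show ?thesis by simp
  qed
  have hom: "p (c *\<^sub>R v) \<le> c * p v" if c: "c > 0" for c v
  proof -
    have "p (c *\<^sub>R v) / c \<le> a" if a: "a \<in> S v" for a
    proof -
      obtain t k where tk: "t \<ge> 0" "k \<in> K1" "a = norm (v + t *\<^sub>R (k - x)) - t * d"
        using a unfolding S_def by blast
      have "norm (c *\<^sub>R v + (c * t) *\<^sub>R (k - x)) - (c * t) * d \<in> S (c *\<^sub>R v)"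
        unfolding S_def using tk c by (intro CollectI exI[of _ "c * t"] exI[of _ k]) simp
      moreover have "norm (c *\<^sub>R v + (c * t) *\<^sub>R (k - x)) - (c * t) * d = c * a"
      proof -
        have "c *\<^sub>R v + (c * t) *\<^sub>R (k - x) = c *\<^sub>R (v + t *\<^sub>R (k - x))" by (simp add: algebra_simps)
        then have "norm (c *\<^sub>R v + (c * t) *\<^sub>R (k - x)) = c * norm (v + t *\<^sub>R (k - x))" using c by simp
        moreover have "norm (v + t *\<^sub>R (k - x)) = a + t * d" using tk(3) by simp
        ultimately show ?thesis by (simp add: algebra_simps)
      qed
      ultimately have "p (c *\<^sub>R v) \<le> c * a" using pS by metis
      then show ?thesis using c by (simp add: divide_simps mult.commute)
    qed
    then have "p (c *\<^sub>R v) / c \<le> p v" by (intro Sp)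
    then show ?thesis using c by (simp add: divide_simps mult.commute)
  qed
  have p0: "p 0 \<le> 0"
  proof -
    have "norm (0 + 0 *\<^sub>R (k0 - x)) - 0 * d \<in> S 0" unfolding S_def using k0 by (intro CollectI exI[of _ "0::real"] exI[of _ k0]) simp
    then show ?thesis using pS[of _ 0] by simp
  qed
  have pn: "p v \<le> norm v" for v
  proof -
    have "norm (v + 0 *\<^sub>R (k0 - x)) - 0 * d \<in> S v" unfolding S_def using k0 by (intro CollectI exI[of _ "0::real"] exI[of _ k0]) simp
    then show ?thesis using pS[of _ v] by simp
  qed
  have pk: "p (x - k) \<le> - d" if "k \<in> K1" for k
  proof -
    have "norm ((x - k) + 1 *\<^sub>R (k - x)) - 1 * d \<in> S (x - k)" unfolding S_def using that
      by (intro CollectI exI[of _ "1::real"] exI[of _ k]) simp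
    then show ?thesis using pS[of _ "x - k"] by simp
  qed
  obtain F where F: "linear F" "\<And>v. F v \<le> p v" using hb_exists[of p, OF sub hom p0] by blast
  have "bounded_linear F"
  proof (rule bounded_linear_intro[where K=1])
    fix u v show "F (u + v) = F u + F v" using F(1) by (simp add: linear_add)
  next
    fix r v show "F (r *\<^sub>R v) = r *\<^sub>R F v" using F(1) by (simp add: linear_scale)
  next
    fix v
    have "F v \<le> norm v" using F(2) pn order_trans by blast
    moreover have "- F v \<le> norm v" using F(2)[of "-v"] pn[of "-v"] F(1) by (simp add: linear_neg)
    ultimately show "norm (F v) \<le> norm v * 1" by simp
  qed
  moreover have "\<forall>k\<in>K1. F x + d \<le> F k"
  proof
    fix k assume "k \<in> K1"
    then have "F (x - k) \<le> - d" using F(2) pk order_trans by blast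
    then show "F x + d \<le> F k" using F(1) by (simp add: linear_diff)
  qed
  ultimately show ?thesis using d by (intro exI[of _ F] exI[of _ d]) simp
qed

lemma weakly_compact_closed_convex:
  fixes K :: "'a::real_normed_vector set"
  assumes K: "weakly_compact K" and sub: "K1 \<subseteq> K" and cl: "closed K1" and cv: "convex K1"
  shows "weakly_compact K1"
proof (cases "K1 = {}")
  case True then show ?thesis unfolding weakly_compact_def by simp
next
  case False
  define B where "B = {{x. f x \<in> U} | (f :: 'a \<Rightarrow> real) U. bounded_linear f \<and> open U}"
  have wt: "weak_topology = topology_generated_by B" unfolding B_def weak_topology_def ..
  have "(UNIV :: 'a set) \<in> B" unfolding B_def
    by (rule CollectI, rule exI[of _ "\<lambda>_. 0::real"], rule exI[of _ UNIV]) (simp add: bounded_linear_zero)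
  then have "\<Union>B = UNIV" by blast
  then have top: "topspace (weak_topology :: 'a topology) = UNIV" unfolding wt by simp
  have "openin weak_topology (UNIV - K1)"
  proof (subst openin_subopen, intro ballI)
    fix x assume "x \<in> UNIV - K1"
    then have "x \<notin> K1" by simp
    then obtain F :: "'a \<Rightarrow> real" and d :: real where Fd: "bounded_linear F" "d > 0" "\<forall>k\<in>K1. F x + d \<le> F k"
      using sep_point[OF cl cv False] by blast
    define T where "T = {y. F y \<in> {..< F x + d}}"
    have "T \<in> B"
      unfolding T_def B_def
      by (rule CollectI, rule exI[of _ F], rule exI[of _ "{..<F x + d}"]) (simp add: Fd(1))
    then have "openin weak_topology T" unfolding wt by (rule topology_generated_by_Basis)
    moreover have "x \<in> T" unfolding T_def using Fd(2) by simp
    moreover have "T \<subseteq> UNIV - K1"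
    proof
      fix y assume "y \<in> T"
      then have "F y < F x + d" unfolding T_def by simp
      then show "y \<in> UNIV - K1" using Fd(3) by force
    qed
    ultimately show "\<exists>T. openin weak_topology T \<and> x \<in> T \<and> T \<subseteq> UNIV - K1" by blast
  qed
  then have "closedin weak_topology K1" unfolding closedin_def top by simp
  moreover have "compactin weak_topology K" using K unfolding weakly_compact_def .
  ultimately show ?thesis unfolding weakly_compact_def using closed_compactin sub by blast
qed

lemma weak_topspace: "topspace (weak_topology :: 'a::real_normed_vector topology) = UNIV"
proof -
  define B where "B = {{x. f x \<in> U} | (f :: 'a \<Rightarrow> real) U. bounded_linear f \<and> open U}"
  have wt: "weak_topology = topology_generated_by B" unfolding B_def weak_topology_def ..
  have "(UNIV :: 'a set) \<in> B" unfolding B_def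
    by (rule CollectI, rule exI[of _ "\<lambda>_. 0::real"], rule exI[of _ UNIV]) (simp add: bounded_linear_zero)
  then have "\<Union>B = UNIV" by blast
  then show ?thesis unfolding wt by simp
qed

lemma weak_cont:
  fixes f :: "'a::real_normed_vector \<Rightarrow> real"
  assumes "bounded_linear f"
  shows "continuous_map weak_topology euclideanreal f"
  unfolding continuous_map_def
proof (intro conjI allI impI)
  show "f \<in> topspace weak_topology \<rightarrow> topspace euclideanreal" by simp
next
  fix U :: "real set" assume "openin euclideanreal U"
  then have oU: "open U" by simp
  have "{x \<in> topspace weak_topology. f x \<in> U} = {x. f x \<in> U}" by (simp add: weak_topspace)
  moreover have "{x. f x \<in> U} \<in> {{x. f x \<in> U} | (f :: 'a \<Rightarrow> real) U. bounded_linear f \<and> open U}"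
    by (rule CollectI, rule exI[of _ f], rule exI[of _ U]) (simp add: assms oU)
  then have "openin weak_topology {x. f x \<in> U}"
    unfolding weak_topology_def by (rule topology_generated_by_Basis)
  ultimately show "openin weak_topology {x \<in> topspace weak_topology. f x \<in> U}" by simp
qed

lemma weakly_compact_bounded:
  fixes K :: "'a::real_normed_vector set"
  assumes K: "weakly_compact K"
  shows "bounded K"
proof -
  have fb: "\<exists>M. \<forall>x\<in>K. \<bar>blinfun_apply f x\<bar> \<le> M" for f :: "'a \<Rightarrow>\<^sub>L real"
  proof -
    have "compactin euclideanreal (blinfun_apply f ` K)"
      using image_compactin[OF K[unfolded weakly_compact_def] weak_cont[OF blinfun.bounded_linear_right]] .
    then have "bounded (blinfun_apply f ` K)" by (simp add: compact_imp_bounded)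
    then obtain M where "\<forall>y\<in>blinfun_apply f ` K. norm y \<le> M" unfolding bounded_iff by blast
    then show ?thesis by auto
  qed
  define E where "E n = {f :: 'a \<Rightarrow>\<^sub>L real. \<forall>x\<in>K. \<bar>blinfun_apply f x\<bar> \<le> real n}" for n :: nat
  have clE: "closed (E n)" for n
  proof -
    have "E n = (\<Inter>x\<in>K. {f :: 'a \<Rightarrow>\<^sub>L real. \<bar>blinfun_apply f x\<bar> \<le> real n})" unfolding E_def by auto
    moreover have "closed {f :: 'a \<Rightarrow>\<^sub>L real. \<bar>blinfun_apply f x\<bar> \<le> real n}" for x
    proof (rule closed_Collect_le)
      have "continuous_on UNIV (\<lambda>f :: 'a \<Rightarrow>\<^sub>L real. blinfun_apply f x)"
        by (rule linear_continuous_on[OF blinfun.bounded_linear_left])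
      then show "continuous_on UNIV (\<lambda>f :: 'a \<Rightarrow>\<^sub>L real. \<bar>blinfun_apply f x\<bar>)"
        by (intro continuous_intros)
    qed simp
    ultimately show ?thesis by auto
  qed
  have UE: "\<Union>(range E) = UNIV"
  proof -
    have "f \<in> \<Union>(range E)" for f
    proof -
      obtain M where M: "\<forall>x\<in>K. \<bar>blinfun_apply f x\<bar> \<le> M" using fb by blast
      obtain n where "M \<le> real n" using real_arch_simple by blast
      then have "\<forall>x\<in>K. \<bar>blinfun_apply f x\<bar> \<le> real n" using M by (meson order_trans)
      then have "f \<in> E n" unfolding E_def by simp
      then show ?thesis by blast
    qed
    then show ?thesis by blast
  qed
  have "\<exists>n. euclidean interior_of (E n) \<noteq> {}"
  proof (rule ccontr)
    assume "\<not> (\<exists>n. euclidean interior_of (E n) \<noteq> {})"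
    then have B: "euclidean interior_of (E n) = {}" for n by blast
    have A: "closedin euclidean (E n)" for n using clE[of n] by (simp only: closed_closedin)
    have "euclidean interior_of \<Union>(range E) = {}"
    proof (rule Baire_category_alt)
      show "completely_metrizable_space (euclidean :: ('a \<Rightarrow>\<^sub>L real) topology) \<or>
          locally_compact_space (euclidean :: ('a \<Rightarrow>\<^sub>L real) topology) \<and> regular_space (euclidean :: ('a \<Rightarrow>\<^sub>L real) topology)"
        by (rule disjI1, rule completely_metrizable_space_euclidean)
      show "countable (range E)" by (rule countable_image) simp
      fix T assume "T \<in> range E"
      then show "closedin euclidean T \<and> euclidean interior_of T = {}" using A B by blast
    qed
    then show False using UE by simp
  qed
  then obtain n f0 where "f0 \<in> euclidean interior_of (E n)" by blast
  then obtain T where T: "open T" "f0 \<in> T" "T \<subseteq> E n" unfolding interior_of_def by auto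
  then obtain r where r0: "r > 0" "ball f0 r \<subseteq> T" using open_contains_ball by blast
  then have r: "r > 0" "ball f0 r \<subseteq> E n" using T(3) by auto
  have "norm x \<le> 4 * real n / r" if xK: "x \<in> K" for x
  proof -
    obtain F where F: "bounded_linear F" "\<forall>v. \<bar>F v\<bar> \<le> norm v" "F x = norm x"
      using norming_functional[of x] by blast
    define g where "g = Blinfun F"
    have gF: "blinfun_apply g = F" unfolding g_def using F(1) by (rule bounded_linear_Blinfun_apply)
    have ng: "norm g \<le> 1"
      by (rule norm_blinfun_bound) (use F(2) gF in auto)
    define h where "h = f0 + (r/2) *\<^sub>R g"
    have "dist f0 h = (r/2) * norm g" unfolding h_def using r by (simp add: dist_norm)
    also have "\<dots> < r"
    proof -
      have "(r/2) * norm g \<le> (r/2) * 1" using ng r by (intro mult_left_mono) auto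
      then show ?thesis using r by linarith
    qed
    finally have "h \<in> E n" "f0 \<in> E n" using r by auto
    then have "\<bar>blinfun_apply h x\<bar> \<le> real n" "\<bar>blinfun_apply f0 x\<bar> \<le> real n" using xK unfolding E_def by auto
    moreover have "blinfun_apply h x = blinfun_apply f0 x + (r/2) * norm x"
      unfolding h_def using gF F(3) by (simp add: blinfun.add_left blinfun.scaleR_left)
    ultimately have "(r/2) * norm x \<le> 2 * real n" by linarith
    then show ?thesis using r by (simp add: field_simps)
  qed
  then show ?thesis unfolding bounded_iff by blast
qed

lemma rad_eq_bound:
  fixes x :: "'a::real_normed_vector"
  assumes ne: "A \<noteq> {}" and le: "\<And>y. y \<in> A \<Longrightarrow> norm (x - y) \<le> D"
    and ap: "\<And>e. e > 0 \<Longrightarrow> \<exists>y\<in>A. D - e < norm (x - y)"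
  shows "rad x A = D"
proof -
  have bdd: "bdd_above ((\<lambda>y. norm (x - y)) ` A)" using le by (auto simp: bdd_above_def)
  have 1: "rad x A \<le> D" unfolding rad_def using ne le by (rule cSUP_least)
  have 2: "D \<le> rad x A"
  proof (rule ccontr)
    assume "\<not> D \<le> rad x A"
    then have "D - rad x A > 0" by simp
    then obtain y where y: "y \<in> A" "D - (D - rad x A) < norm (x - y)" using ap by blast
    have "norm (x - y) \<le> rad x A" unfolding rad_def using bdd y(1) by (rule cSUP_upper2) simp
    then show False using y(2) by simp
  qed
  show ?thesis using 1 2 by simp
qed

lemma diam_seq:
  fixes K0 :: "'a::real_normed_vector set"
  assumes cv: "convex K0" and bK0: "bounded K0" and ne: "a \<in> K0"
    and dpos: "diameter K0 > 0"
    and far: "\<And>y e. y \<in> K0 \<Longrightarrow> e > 0 \<Longrightarrow> \<exists>z\<in>K0. diameter K0 - e < norm (y - z)"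
  shows "\<exists>s. (\<forall>n. s n \<in> K0) \<and>
     (\<forall>(l::nat\<Rightarrow>real) N n. (\<forall>i. 0 \<le> l i) \<longrightarrow> (\<forall>i>N. l i = 0) \<longrightarrow> (\<Sum>i\<le>N. l i) = 1 \<longrightarrow> N \<le> n \<longrightarrow>
        diameter K0 - diameter K0 / (real n + 2) < norm ((\<Sum>i\<le>N. l i *\<^sub>R s i) - s (Suc n)))"
proof -
  define \<delta> where "\<delta> = diameter K0"
  have dle: "norm (u - v) \<le> \<delta>" if "u \<in> K0" "v \<in> K0" for u v
    using diameter_bounded_bound[OF bK0 that] unfolding \<delta>_def by (simp add: dist_norm)
  define pick where "pick n y = (SOME z. z \<in> K0 \<and> \<delta> - \<delta> / ((real n + 1) * (real n + 2)) < norm (y - z))" for n y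
  have pick: "pick n y \<in> K0 \<and> \<delta> - \<delta> / ((real n + 1) * (real n + 2)) < norm (y - pick n y)" if "y \<in> K0" for n y
  proof -
    have "\<delta> / ((real n + 1) * (real n + 2)) > 0" using dpos unfolding \<delta>_def by simp
    then have "\<exists>z. z \<in> K0 \<and> \<delta> - \<delta> / ((real n + 1) * (real n + 2)) < norm (y - z)"
      using far[OF that] unfolding \<delta>_def by blast
    then show ?thesis unfolding pick_def by (rule someI_ex)
  qed
  define st where "st = rec_nat (a, a) (\<lambda>n p. (pick n (snd p /\<^sub>R (real n + 1)), snd p + pick n (snd p /\<^sub>R (real n + 1))))"
  have st0: "st 0 = (a, a)" unfolding st_def by simp
  have stS: "st (Suc n) = (pick n (snd (st n) /\<^sub>R (real n + 1)), snd (st n) + pick n (snd (st n) /\<^sub>R (real n + 1)))" for n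
    unfolding st_def by simp
  define s where "s n = fst (st n)" for n
  define y where "y n = (\<Sum>i\<le>n. s i) /\<^sub>R (real n + 1)" for n
  have inv: "(\<forall>i\<le>n. s i \<in> K0) \<and> snd (st n) = (\<Sum>i\<le>n. s i)" for n
  proof (induction n)
    case 0 then show ?case using st0 ne unfolding s_def by simp
  next
    case (Suc n)
    have "(\<Sum>i\<le>n. s i) /\<^sub>R (real n + 1) = (\<Sum>i\<le>n. (1 / (real n + 1)) *\<^sub>R s i)"
      by (simp add: scaleR_sum_right divide_inverse_commute)
    moreover have "(\<Sum>i\<le>n. (1 / (real n + 1)) *\<^sub>R s i) \<in> K0"
    proof (rule convex_sum[OF _ cv])
      have "(\<Sum>i\<le>n. 1 / (real n + 1)) = 1" by simp
      then show "(\<Sum>i\<le>n. 1 / (real n + 1)) = 1" .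
    next
      fix i assume "i \<in> {..n}"
      then show "0 \<le> 1 / (real n + 1)" by simp
    next
      fix i assume "i \<in> {..n}"
      then show "s i \<in> K0" using Suc.IH by simp
    qed simp
    ultimately have yK: "snd (st n) /\<^sub>R (real n + 1) \<in> K0" using Suc.IH by simp
    have "s (Suc n) = pick n (snd (st n) /\<^sub>R (real n + 1))" unfolding s_def stS by simp
    then have 1: "s (Suc n) \<in> K0" using pick[OF yK] by simp
    have "snd (st (Suc n)) = snd (st n) + s (Suc n)" unfolding stS s_def by simp
    also have "\<dots> = (\<Sum>i\<le>n. s i) + s (Suc n)" using Suc.IH by simp
    also have "\<dots> = (\<Sum>i\<le>Suc n. s i)" by simp
    finally have 2: "snd (st (Suc n)) = (\<Sum>i\<le>Suc n. s i)" .
    have 3: "\<forall>i\<le>Suc n. s i \<in> K0"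
    proof (intro allI impI)
      fix i assume "i \<le> Suc n"
      then consider "i \<le> n" | "i = Suc n" by linarith
      then show "s i \<in> K0" using 1 Suc.IH by cases auto
    qed
    show ?case using 2 3 by blast
  qed
  have sK: "s n \<in> K0" for n using inv[of n] by simp
  have yK: "y n \<in> K0" for n
  proof -
    have "y n = (\<Sum>i\<le>n. (1 / (real n + 1)) *\<^sub>R s i)"
      unfolding y_def by (simp add: scaleR_sum_right divide_inverse_commute)
    also have "\<dots> \<in> K0"
      by (rule convex_sum[OF _ cv]) (auto simp: sK)
    finally show ?thesis .
  qed
  have sS: "s (Suc n) = pick n (y n)" for n
    unfolding s_def stS y_def using inv[of n] s_def by simp
  have fars: "\<delta> - \<delta> / ((real n + 1) * (real n + 2)) < norm (y n - s (Suc n))" for n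
    using pick[OF yK[of n]] sS[of n] by simp
  have key: "\<delta> - \<delta> / (real n + 2) < norm ((\<Sum>i\<le>n. l i *\<^sub>R s i) - s (Suc n))"
    if l0: "\<And>i. 0 \<le> l i" and l1: "(\<Sum>i\<le>n. l i) = 1" for l :: "nat \<Rightarrow> real" and n
  proof -
    define w where "w = s (Suc n)"
    define z where "z = (\<Sum>i\<le>n. l i *\<^sub>R s i)"
    have lle: "l i \<le> 1" if "i \<le> n" for i
    proof -
      have "l i \<le> (\<Sum>i\<le>n. l i)" using that l0 by (intro member_le_sum) auto
      then show ?thesis using l1 by simp
    qed
    have e1: "(\<Sum>i\<le>n. (s i - w)) = (real n + 1) *\<^sub>R (y n - w)"
    proof -
      have "(\<Sum>i\<le>n. (s i - w)) = (\<Sum>i\<le>n. s i) - (real n + 1) *\<^sub>R w"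
        by (simp add: sum_subtractf sum_constant_scaleR add.commute)
      also have "(\<Sum>i\<le>n. s i) = (real n + 1) *\<^sub>R y n"
        unfolding y_def by simp
      finally show ?thesis by (simp add: scaleR_right_diff_distrib)
    qed
    have e2: "(\<Sum>i\<le>n. l i *\<^sub>R (s i - w)) = z - w"
    proof -
      have "(\<Sum>i\<le>n. l i *\<^sub>R (s i - w)) = z - (\<Sum>i\<le>n. l i) *\<^sub>R w"
        unfolding z_def by (simp add: scaleR_right_diff_distrib sum_subtractf scaleR_sum_left)
      then show ?thesis using l1 by simp
    qed
    have e3: "(\<Sum>i\<le>n. (s i - w)) = (z - w) + (\<Sum>i\<le>n. (1 - l i) *\<^sub>R (s i - w))"
    proof -
      have "(\<Sum>i\<le>n. (1 - l i) *\<^sub>R (s i - w)) = (\<Sum>i\<le>n. (s i - w)) - (\<Sum>i\<le>n. l i *\<^sub>R (s i - w))"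
        by (simp add: scaleR_left_diff_distrib sum_subtractf)
      then show ?thesis using e2 by simp
    qed
    have n3: "norm (\<Sum>i\<le>n. (1 - l i) *\<^sub>R (s i - w)) \<le> real n * \<delta>"
    proof -
      have "norm (\<Sum>i\<le>n. (1 - l i) *\<^sub>R (s i - w)) \<le> (\<Sum>i\<le>n. norm ((1 - l i) *\<^sub>R (s i - w)))"
        by (rule norm_sum)
      also have "\<dots> \<le> (\<Sum>i\<le>n. (1 - l i) * \<delta>)"
      proof (rule sum_mono)
        fix i assume "i \<in> {..n}"
        then have "0 \<le> 1 - l i" using lle by simp
        moreover have "norm (s i - w) \<le> \<delta>" unfolding w_def using dle sK by blast
        ultimately show "norm ((1 - l i) *\<^sub>R (s i - w)) \<le> (1 - l i) * \<delta>"
          by (simp add: mult_left_mono)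
      qed
      also have "\<dots> = ((real n + 1) - 1) * \<delta>"
        using l1 by (simp add: sum_distrib_right[symmetric] sum_subtractf)
      finally show ?thesis by simp
    qed
    have "(real n + 1) * norm (y n - w) = norm ((z - w) + (\<Sum>i\<le>n. (1 - l i) *\<^sub>R (s i - w)))"
      using e1 e3 by (metis norm_scaleR abs_of_nonneg of_nat_0_le_iff add_nonneg_nonneg zero_le_one)
    also have "\<dots> \<le> norm (z - w) + real n * \<delta>"
      using norm_triangle_ineq[of "z - w" "(\<Sum>i\<le>n. (1 - l i) *\<^sub>R (s i - w))"] n3 by linarith
    finally have A: "(real n + 1) * norm (y n - w) \<le> norm (z - w) + real n * \<delta>" .
    have B: "\<delta> - \<delta> / ((real n + 1) * (real n + 2)) < norm (y n - w)" using fars unfolding w_def .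
    have "(real n + 1) * (\<delta> - \<delta> / ((real n + 1) * (real n + 2))) < (real n + 1) * norm (y n - w)"
      using B by simp
    moreover have "(real n + 1) * (\<delta> - \<delta> / ((real n + 1) * (real n + 2))) = (real n + 1) * \<delta> - \<delta> / (real n + 2)"
    proof -
      have "(real n + 1) * (\<delta> / ((real n + 1) * (real n + 2))) = \<delta> / (real n + 2)"
        by (simp add: divide_simps)
      then show ?thesis by (simp add: right_diff_distrib)
    qed
    ultimately have "(real n + 1) * \<delta> - \<delta> / (real n + 2) < norm (z - w) + real n * \<delta>" using A by linarith
    then have "\<delta> - \<delta> / (real n + 2) < norm (z - w)" by (simp add: algebra_simps)
    then show ?thesis unfolding z_def w_def .
  qed
  have "\<forall>(l::nat\<Rightarrow>real) N n. (\<forall>i. 0 \<le> l i) \<longrightarrow> (\<forall>i>N. l i = 0) \<longrightarrow> (\<Sum>i\<le>N. l i) = 1 \<longrightarrow> N \<le> n \<longrightarrow>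
        \<delta> - \<delta> / (real n + 2) < norm ((\<Sum>i\<le>N. l i *\<^sub>R s i) - s (Suc n))"
  proof (intro allI impI)
    fix l :: "nat \<Rightarrow> real" and N n
    assume l0: "\<forall>i. 0 \<le> l i" and lz: "\<forall>i>N. l i = 0" and l1: "(\<Sum>i\<le>N. l i) = 1" and Nn: "N \<le> n"
    have "(\<Sum>i\<le>N. l i) = (\<Sum>i\<le>n. l i)"
      by (rule sum.mono_neutral_left) (use lz Nn in auto)
    moreover have "(\<Sum>i\<le>N. l i *\<^sub>R s i) = (\<Sum>i\<le>n. l i *\<^sub>R s i)"
      by (rule sum.mono_neutral_left) (use lz Nn in auto)
    ultimately show "\<delta> - \<delta> / (real n + 2) < norm ((\<Sum>i\<le>N. l i *\<^sub>R s i) - s (Suc n))"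
      using key[of l n] l0 l1 by simp
  qed
  then show ?thesis using sK unfolding \<delta>_def by blast
qed

theorem corollary4p1:
  assumes "weak_quasi_normal_structure TYPE('a::banach)"
    and "\<not> weak_normal_structure TYPE('a)"
  shows "\<exists>(K :: 'a set) T. nontrivial K \<and> weakly_compact K \<and> convex K \<and> T ` K \<subseteq> K \<and>
           \<not> kannan K T \<and> orbitally_kannan K T \<and> diminishes_radius_of_orbits K T \<and>
           \<not> (\<exists>x\<in>K. T x = x)"
proof -
  obtain K K0 :: "'a set" where K: "weakly_compact K" and K0: "K0 \<subseteq> K" "closed K0" "convex K0" "diameter K0 > 0"
    and diam: "\<forall>x0\<in>K0. \<not> rad x0 K0 < diameter K0"
    using assms(2) unfolding weak_normal_structure_def by blast
  define \<delta> where "\<delta> = diameter K0"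
  have dpos: "\<delta> > 0" using K0 unfolding \<delta>_def by simp
  have bK0: "bounded K0" using weakly_compact_bounded[OF K] K0(1) bounded_subset by blast
  have neK0: "K0 \<noteq> {}" using K0(4) by auto
  have dle: "norm (u - v) \<le> \<delta>" if "u \<in> K0" "v \<in> K0" for u v
    using diameter_bounded_bound[OF bK0 that] unfolding \<delta>_def by (simp add: dist_norm)
  have far: "\<exists>z\<in>K0. diameter K0 - e < norm (y - z)" if y: "y \<in> K0" and e: "e > 0" for y e
  proof -
    have "\<delta> \<le> rad y K0" using diam y unfolding \<delta>_def by auto
    then have "\<delta> - e < (SUP z\<in>K0. norm (y - z))" unfolding rad_def using e by simp
    moreover have "bdd_above ((\<lambda>z. norm (y - z)) ` K0)" using dle y by (auto simp: bdd_above_def)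
    ultimately show ?thesis using neK0 unfolding \<delta>_def by (simp add: less_cSUP_iff)
  qed
  obtain a where a: "a \<in> K0" using neK0 by blast
  obtain s where sK: "\<And>n. s n \<in> K0" and
    key: "\<And>(l::nat\<Rightarrow>real) N n. (\<forall>i. 0 \<le> l i) \<Longrightarrow> (\<forall>i>N. l i = 0) \<Longrightarrow> (\<Sum>i\<le>N. l i) = 1 \<Longrightarrow> N \<le> n \<Longrightarrow>
        \<delta> - \<delta> / (real n + 2) < norm ((\<Sum>i\<le>N. l i *\<^sub>R s i) - s (Suc n))"
    using diam_seq[OF K0(3) bK0 a K0(4) far] unfolding \<delta>_def by blast
  have half: "\<delta> - \<delta> / (real n + 2) > 0" for n
  proof -
    have "\<delta> / (real n + 2) < \<delta>" using dpos by (simp add: divide_simps)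
    then show ?thesis by simp
  qed
  define ind where "ind i = (\<lambda>j::nat. if j = i then 1 else 0 :: real)" for i :: nat
  have ind_sum: "(\<Sum>j\<le>N. ind i j *\<^sub>R s j) = s i" "(\<Sum>j\<le>N. ind i j) = 1" if "i \<le> N" for i N
  proof -
    have "(\<Sum>j\<le>N. ind i j *\<^sub>R s j) = (\<Sum>j\<le>N. if j = i then s i else 0)"
      by (rule sum.cong) (auto simp: ind_def)
    also have "\<dots> = s i" using that by simp
    finally show "(\<Sum>j\<le>N. ind i j *\<^sub>R s j) = s i" .
    have "(\<Sum>j\<le>N. ind i j) = (\<Sum>j\<le>N. if j = i then 1 else 0)"
      by (rule sum.cong) (auto simp: ind_def)
    also have "\<dots> = 1" using that by simp
    finally show "(\<Sum>j\<le>N. ind i j) = 1" .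
  qed
  have vert: "\<delta> - \<delta> / (real n + 2) < norm (s i - s (Suc n))" if "i \<le> n" for i n
    using key[of "ind i" i n] ind_sum[of i i] that unfolding ind_def by auto
  have sne: "s i \<noteq> s j" if ij: "i < j" for i j
  proof -
    obtain n where j: "j = Suc n" using ij by (cases j) auto
    then have "i \<le> n" using ij by simp
    then show ?thesis using vert[of i n] half[of n] j by auto
  qed
  have inj: "inj s"
    by (rule linorder_injI) (use sne in auto)
  define D where "D = {(\<Sum>i\<le>N. l i *\<^sub>R s i) | (l::nat\<Rightarrow>real) N. (\<forall>i. 0 \<le> l i) \<and> (\<forall>i>N. l i = 0) \<and> (\<Sum>i\<le>N. l i) = 1}"
  have sD: "s i \<in> D" for i
  proof -
    have "s i = (\<Sum>j\<le>i. ind i j *\<^sub>R s j)" using ind_sum by simp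
    moreover have "(\<forall>j. 0 \<le> ind i j) \<and> (\<forall>j>i. ind i j = 0) \<and> (\<Sum>j\<le>i. ind i j) = 1"
      using ind_sum unfolding ind_def by simp
    ultimately show ?thesis unfolding D_def by blast
  qed
  have DK0: "D \<subseteq> K0"
  proof
    fix z assume "z \<in> D"
    then obtain l N where z: "z = (\<Sum>i\<le>N. l i *\<^sub>R s i)" "\<forall>i. 0 \<le> l i" "(\<Sum>i\<le>N. l i) = 1"
      unfolding D_def by blast
    show "z \<in> K0" unfolding z(1) by (rule convex_sum[OF _ K0(3)]) (use z sK in auto)
  qed
  have extR: "(\<Sum>i\<le>N. g i) = (\<Sum>i\<le>M. g i)" if "\<forall>i>N. g i = 0" "N \<le> M" for g :: "nat \<Rightarrow> real" and N M
    by (rule sum.mono_neutral_left) (use that in auto)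
  have extV: "(\<Sum>i\<le>N. g i) = (\<Sum>i\<le>M. g i)" if "\<forall>i>N. g i = 0" "N \<le> M" for g :: "nat \<Rightarrow> 'a" and N M
    by (rule sum.mono_neutral_left) (use that in auto)
  have convD: "convex D"
    unfolding convex_def
  proof (intro ballI allI impI)
    fix z1 z2 assume "z1 \<in> D" "z2 \<in> D"
    fix u v :: real assume uv: "0 \<le> u" "0 \<le> v" "u + v = 1"
    obtain l1 N1 where 1: "z1 = (\<Sum>i\<le>N1. l1 i *\<^sub>R s i)" "\<forall>i. 0 \<le> l1 i" "\<forall>i>N1. l1 i = 0" "(\<Sum>i\<le>N1. l1 i) = 1"
      using \<open>z1 \<in> D\<close> unfolding D_def by blast
    obtain l2 N2 where 2: "z2 = (\<Sum>i\<le>N2. l2 i *\<^sub>R s i)" "\<forall>i. 0 \<le> l2 i" "\<forall>i>N2. l2 i = 0" "(\<Sum>i\<le>N2. l2 i) = 1"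
      using \<open>z2 \<in> D\<close> unfolding D_def by blast
    define N where "N = max N1 N2"
    define l where "l i = u * l1 i + v * l2 i" for i
    have z1N: "z1 = (\<Sum>i\<le>N. l1 i *\<^sub>R s i)" unfolding 1(1) N_def by (rule extV) (use 1(3) in auto)
    have z2N: "z2 = (\<Sum>i\<le>N. l2 i *\<^sub>R s i)" unfolding 2(1) N_def by (rule extV) (use 2(3) in auto)
    have s1N: "(\<Sum>i\<le>N. l1 i) = 1" using 1(4) extR[where g=l1 and N=N1 and M=N] 1(3) unfolding N_def by auto
    have s2N: "(\<Sum>i\<le>N. l2 i) = 1" using 2(4) extR[where g=l2 and N=N2 and M=N] 2(3) unfolding N_def by auto
    have "u *\<^sub>R z1 + v *\<^sub>R z2 = (\<Sum>i\<le>N. l i *\<^sub>R s i)"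
      unfolding z1N z2N l_def by (simp add: scaleR_sum_right sum.distrib[symmetric] scaleR_add_left)
    moreover have "\<forall>i. 0 \<le> l i" unfolding l_def using uv 1(2) 2(2) by simp
    moreover have "\<forall>i>N. l i = 0" unfolding l_def N_def using 1(3) 2(3) by simp
    moreover have "(\<Sum>i\<le>N. l i) = 1"
      unfolding l_def using s1N s2N uv by (simp add: sum.distrib sum_distrib_left[symmetric])
    ultimately show "u *\<^sub>R z1 + v *\<^sub>R z2 \<in> D" unfolding D_def by blast
  qed
  define K1 where "K1 = closure D"
  have K1K0: "K1 \<subseteq> K0" unfolding K1_def using DK0 K0(2) by (rule closure_minimal)
  have sK1: "s i \<in> K1" for i unfolding K1_def using sD closure_subset by blast
  have cvK1: "convex K1" unfolding K1_def using convD by (rule convex_closure)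
  have clK1: "closed K1" unfolding K1_def by simp
  have wcK1: "weakly_compact K1"
    using weakly_compact_closed_convex[OF K _ clK1 cvK1] K1K0 K0(1) by blast
  have P: "\<exists>n\<ge>m. \<delta> - e < norm (x - s n)" if xK1: "x \<in> K1" and e: "e > 0" for x m e
  proof -
    obtain z where z: "z \<in> D" "dist z x < e/2"
      using xK1 e unfolding K1_def closure_approachable by (meson half_gt_zero)
    obtain l N where lN: "z = (\<Sum>i\<le>N. l i *\<^sub>R s i)" "\<forall>i. 0 \<le> l i" "\<forall>i>N. l i = 0" "(\<Sum>i\<le>N. l i) = 1"
      using z(1) unfolding D_def by blast
    obtain k where k: "2 * \<delta> / e < real k" using reals_Archimedean2 by blast
    define n where "n = max (max m N) k"
    have "N \<le> n" unfolding n_def by simp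
    then have A: "\<delta> - \<delta> / (real n + 2) < norm (z - s (Suc n))" using key lN by blast
    have "2 * \<delta> / e < real n + 2" using k unfolding n_def by linarith
    then have "2 * \<delta> < e * (real n + 2)" using e by (simp add: divide_less_eq mult.commute)
    then have B: "\<delta> / (real n + 2) < e / 2" by (simp add: divide_simps)
    have C: "norm (z - s (Suc n)) \<le> norm (x - s (Suc n)) + norm (x - z)"
      using norm_triangle_ineq4[of "x - s (Suc n)" "x - z"] by (simp add: norm_minus_commute)
    have "norm (x - z) < e/2" using z(2) by (simp add: dist_norm norm_minus_commute)
    then have "\<delta> - e < norm (x - s (Suc n))" using A B C by linarith
    moreover have "Suc n \<ge> m" unfolding n_def by simp
    ultimately show ?thesis by blast
  qed
  define T where "T x = (if x \<in> range s then s (Suc (inv s x)) else s 0)" for x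
  have Ts: "T (s n) = s (Suc n)" for n unfolding T_def using inj by simp
  have Tn: "T x = s 0" if "x \<notin> range s" for x unfolding T_def using that by simp
  have Trange: "T x \<in> range s" for x unfolding T_def by auto
  have TinK1: "T x \<in> K1" for x
  proof -
    obtain i where "T x = s i" using Trange[of x] by blast
    then show ?thesis using sK1 by simp
  qed
  have TinK0: "T x \<in> K0" for x using TinK1 K1K0 by blast
  have pow_s: "(T ^^ k) (s m) = s (m + k)" for k m by (induction k) (simp_all add: Ts)
  have pow_n: "(T ^^ Suc k) x = s k" if "x \<notin> range s" for k x
  proof (induction k)
    case 0 then show ?case using Tn[OF that] by simp
  next
    case (Suc k) then show ?case by (simp add: Ts)
  qed
  have orbK0: "y \<in> K0" if xy: "x \<in> K1" "y \<in> orbit T x" for x y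
  proof -
    obtain k where y: "y = (T ^^ k) x" using xy(2) unfolding orbit_def by blast
    show ?thesis
    proof (cases k)
      case 0 then show ?thesis using y xy(1) K1K0 by auto
    next
      case (Suc j)
      then have "y = T ((T ^^ j) x)" using y by simp
      then show ?thesis using TinK0 by simp
    qed
  qed
  have tail: "\<exists>m. \<forall>n\<ge>m. s n \<in> orbit T x" for x
  proof (cases "x \<in> range s")
    case True
    then obtain m where x: "x = s m" by blast
    have "s n \<in> orbit T x" if "n \<ge> m" for n
    proof -
      have "s n = (T ^^ (n - m)) x" using x pow_s[of "n - m" m] that by simp
      then show ?thesis unfolding orbit_def by blast
    qed
    then show ?thesis by blast
  next
    case False
    have "s n \<in> orbit T x" for n
    proof -
      have "s n = (T ^^ Suc n) x" using pow_n[OF False] by simp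
      then show ?thesis unfolding orbit_def by blast
    qed
    then show ?thesis by blast
  qed
  have radK1: "rad x (orbit T x) = \<delta>" if xK1: "x \<in> K1" for x
  proof (rule rad_eq_bound)
    show "orbit T x \<noteq> {}" unfolding orbit_def by simp
  next
    fix y assume "y \<in> orbit T x"
    then show "norm (x - y) \<le> \<delta>" using orbK0 xK1 K1K0 dle by blast
  next
    fix e :: real assume e: "e > 0"
    obtain m where m: "\<forall>n\<ge>m. s n \<in> orbit T x" using tail by blast
    obtain n where "n \<ge> m" "\<delta> - e < norm (x - s n)" using P[OF xK1 e, of m] by blast
    then show "\<exists>y\<in>orbit T x. \<delta> - e < norm (x - y)" using m by blast
  qed
  have TK1: "T ` K1 \<subseteq> K1" using TinK1 by auto
  have s01: "s 0 \<noteq> s 1" using sne[of 0 1] by simp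
  have nontriv: "nontrivial K1" unfolding nontrivial_def using sK1 s01 by blast
  have ok: "orbitally_kannan K1 T"
    unfolding orbitally_kannan_def
  proof (intro ballI)
    fix x y assume "x \<in> K1" "y \<in> K1"
    have "norm (T x - T y) \<le> \<delta>" using TinK0 dle by blast
    then show "norm (T x - T y) \<le> 1 / 2 * (rad x (orbit T x) + rad y (orbit T y))"
      using radK1 \<open>x \<in> K1\<close> \<open>y \<in> K1\<close> by simp
  qed
  have dim: "diminishes_radius_of_orbits K1 T"
    unfolding diminishes_radius_of_orbits_def
  proof
    fix x assume "x \<in> K1"
    moreover have "T x \<in> K1" using TinK1 by blast
    ultimately show "rad (T x) (orbit T (T x)) \<le> rad x (orbit T x)" using radK1 by simp
  qed
  have nofix: "\<not> (\<exists>x\<in>K1. T x = x)"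
  proof
    assume "\<exists>x\<in>K1. T x = x"
    then obtain x where "T x = x" by blast
    show False
    proof (cases "x \<in> range s")
      case True
      then obtain m where "x = s m" by blast
      then show False using \<open>T x = x\<close> Ts sne[of m "Suc m"] by simp
    next
      case False
      then show False using \<open>T x = x\<close> Trange by metis
    qed
  qed
  have nk: "\<not> kannan K1 T"
  proof
    assume kan: "kannan K1 T"
    define lm where "lm i = (if i \<le> 1 then 1/2 else 0 :: real)" for i :: nat
    define x where "x = (\<Sum>i\<le>1. lm i *\<^sub>R s i)"
    have xe: "x = (1/2) *\<^sub>R s 0 + (1/2) *\<^sub>R s 1" unfolding x_def lm_def by simp
    have lm0: "\<forall>i. 0 \<le> lm i" "\<forall>i>1. lm i = 0" "(\<Sum>i\<le>1. lm i) = 1" unfolding lm_def by auto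
    have xD: "x \<in> D" unfolding D_def x_def using lm0 by blast
    then have xK1: "x \<in> K1" unfolding K1_def using closure_subset by blast
    have xns: "x \<noteq> s j" for j
    proof (cases "j \<le> 1")
      case True
      then consider "j = 0" | "j = 1" by linarith
      then show ?thesis
      proof cases
        case 1
        show ?thesis
        proof
          assume "x = s j"
          then have e: "(1/2) *\<^sub>R s 0 + (1/2) *\<^sub>R s 1 = s 0" using xe 1 by simp
          have "s 1 - s 0 = (2::real) *\<^sub>R ((1/2) *\<^sub>R s 0 + (1/2) *\<^sub>R s 1 - s 0)" by (simp add: algebra_simps scaleR_2)
          then have "s 1 - s 0 = 0" using e by simp
          then show False using s01 by simp
        qed
      next
        case 2
        show ?thesis
        proof
          assume "x = s j"
          then have e: "(1/2) *\<^sub>R s 0 + (1/2) *\<^sub>R s 1 = s 1" using xe 2 by simp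
          have "s 1 - s 0 = (-2::real) *\<^sub>R ((1/2) *\<^sub>R s 0 + (1/2) *\<^sub>R s 1 - s 1)" by (simp add: algebra_simps scaleR_2)
          then have "s 1 - s 0 = 0" using e by simp
          then show False using s01 by simp
        qed
      qed
    next
      case False
      then obtain n where j: "j = Suc n" "1 \<le> n" by (cases j) auto
      have "\<delta> - \<delta> / (real n + 2) < norm (x - s (Suc n))" unfolding x_def using key lm0 j(2) by blast
      then show ?thesis using half[of n] j by auto
    qed
    then have "x \<notin> range s" by auto
    then have Tx: "T x = s 0" by (rule Tn)
    have "norm (T x - T (s 0)) \<le> 1/2 * (norm (x - T x) + norm (s 0 - T (s 0)))"
      using kan xK1 sK1 unfolding kannan_def by blast
    then have A: "norm (s 0 - s 1) \<le> 1/2 * (norm (x - s 0) + norm (s 0 - s 1))" using Tx Ts[of 0] by simp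
    have "x - s 0 = (1/2) *\<^sub>R (s 1 - s 0)" unfolding xe by (simp add: algebra_simps scaleR_add_left[symmetric])
    then have "norm (x - s 0) = (1/2) * norm (s 0 - s 1)" by (simp add: norm_minus_commute)
    then have a: "norm (x - s 0) = (1/2) * norm (s 0 - s 1)" .
    have "norm (s 0 - s 1) \<le> 1/2 * ((1/2) * norm (s 0 - s 1) + norm (s 0 - s 1))"
      using A unfolding a .
    then have "norm (s 0 - s 1) \<le> 0" by (simp add: field_simps)
    then show False using s01 by simp
  qed
  show ?thesis
    using nontriv wcK1 cvK1 TK1 nk ok dim nofix by blast
qed

end
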